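(* Let $P$ be a finite nonempty set of nonempty linear strings over a finite alphabet $\Sigma$. Let $w_o$ be a shortest linear superstring of $P$, and let $c_o$ be a shortest circular superstring of $P\cup\overline P$. Then $2|w_o|=|c_o|$.
   Context: Let $\overline\Sigma=\{\overline a: a\in\Sigma\}$ be a disjoint copy of $\Sigma$. For $w=a_1\dots a_k$, set $\overline w=\overline{a_1}\dots\overline{a_k}$, and let $\overline P=\{\overline w: w\in P\}$. A linear superstring of a set of strings is a linear string containing each of them as a substring. A circular string $\langle a_1\dots a_n\rangle$ has length $n$, and its substrings are the finite substrings of $(a_1\dots a_n)^\infty$. A circular superstring is a circular string containing each string of the set as a substring. *)

theory Defs
  imports Main "HOL-Library.Sublist"
begin

text \<open>Strings over an alphabet are lists. The barred copy of the alphabet is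
  realised as the disjoint sum: a letter a is Inl a, its bar is Inr a.\<close>

definition bar_str :: "'a list \<Rightarrow> ('a + 'a) list" where
  "bar_str w = map Inr w"

definition plain_str :: "'a list \<Rightarrow> ('a + 'a) list" where
  "plain_str w = map Inl w"

definition linear_superstring :: "'a list set \<Rightarrow> 'a list \<Rightarrow> bool" where
  "linear_superstring P w \<longleftrightarrow> (\<forall>p\<in>P. sublist p w)"

text \<open>A circular string is represented by a nonempty list c = a_1 ... a_n;
  its substrings are the finite substrings of c^\<infinity>.\<close>
definition circ_substring :: "'a list \<Rightarrow> 'a list \<Rightarrow> bool" where
  "circ_substring s c \<longleftrightarrow> c \<noteq> [] \<and>
     (\<exists>i. \<forall>j < length s. s ! j = c ! ((i + j) mod length c))"

definition circular_superstring :: "'a list set \<Rightarrow> 'a list \<Rightarrow> bool" where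
  "circular_superstring P c \<longleftrightarrow> c \<noteq> [] \<and> (\<forall>p\<in>P. circ_substring p c)"

end

theory Submission
  imports Defs
begin

lemma sublist_circ:
  assumes "sublist s c" "c \<noteq> []"
  shows "circ_substring s c"
proof -
  obtain u v where c: "c = u @ s @ v" using assms(1) by (auto simp: sublist_def)
  have "\<forall>j < length s. s ! j = c ! ((length u + j) mod length c)"
  proof (intro allI impI)
    fix j assume j: "j < length s"
    hence "length u + j < length c" using c by simp
    hence "(length u + j) mod length c = length u + j" by simp
    thus "s ! j = c ! ((length u + j) mod length c)" using c j by (simp add: nth_append)
  qed
  thus ?thesis using assms(2) unfolding circ_substring_def by blast
qed

lemma circ_rotate:
  assumes "circ_substring s c" "r < length c" "\<not> Q (c ! r)" "\<forall>x\<in>set s. Q x"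
  shows "sublist s (rotate r c)"
proof -
  define n where "n = length c"
  obtain i where i: "\<forall>j < length s. s ! j = c ! ((i + j) mod n)"
    using assms(1) unfolding circ_substring_def n_def by blast
  have n0: "n > 0" using assms(2) n_def by linarith
  define k0 where "k0 = (i mod n + n - r) mod n"
  have k0n: "k0 < n" using n0 k0_def by simp
  have key: "(k0 + j + r) mod n = (i + j) mod n" for j
  proof -
    have "(k0 + j + r) mod n = (k0 + (j + r)) mod n" by (simp add: add.assoc)
    also have "\<dots> = ((i mod n + n - r) + (j + r)) mod n"
      unfolding k0_def by (rule mod_add_left_eq)
    also have "(i mod n + n - r) + (j + r) = (i mod n + n - r) + j + r" by simp
    also have "(i mod n + n - r) + j + r = i mod n + j + n" using assms(2) n_def by simp
    also have "(i mod n + j + n) mod n = (i + j) mod n" by (simp add: mod_add_left_eq)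
    finally show ?thesis .
  qed
  have len: "k0 + length s \<le> n"
  proof (rule ccontr)
    assume "\<not> ?thesis"
    hence j: "n - k0 < length s" "k0 + (n - k0) = n" using k0n by linarith+
    define j where "j = n - k0"
    note j = j[folded j_def]
    have "s ! j = c ! ((i + j) mod n)" using i j by blast
    also have "(i + j) mod n = r" using key[of j] j assms(2) n_def by simp
    finally have "s ! j = c ! r" .
    moreover have "Q (s ! j)" using assms(4) j by simp
    ultimately show False using assms(3) by simp
  qed
  have "s = take (length s) (drop k0 (rotate r c))"
  proof (rule nth_equalityI)
    show "length s = length (take (length s) (drop k0 (rotate r c)))"
      using len n_def by simp
  next
    fix j assume j: "j < length s"
    have "take (length s) (drop k0 (rotate r c)) ! j = rotate r c ! (k0 + j)"
      using j len n_def by simp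
    also have "\<dots> = c ! ((k0 + j + r) mod n)" using j len n_def by (simp add: nth_rotate add.commute)
    also have "\<dots> = s ! j" using key i j by simp
    finally show "s ! j = take (length s) (drop k0 (rotate r c)) ! j" by simp
  qed
  moreover have "sublist (take (length s) (drop k0 (rotate r c))) (rotate r c)"
    by (metis append_take_drop_id sublist_appendI)
  ultimately show ?thesis by simp
qed

lemma length_filter_rotate: "length (filter P (rotate r c)) = length (filter P c)"
proof -
  have "length (filter P (rotate r c)) = length (filter P (drop (r mod length c) c))
     + length (filter P (take (r mod length c) c))" by (simp add: rotate_drop_take)
  thus ?thesis by (metis add.commute append_take_drop_id filter_append length_append)
qed

lemma sublist_map: "sublist xs ys \<Longrightarrow> sublist (map f xs) (map f ys)"
  unfolding sublist_def by (metis map_append)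

lemma projl_Plus: "x \<in> A <+> B \<Longrightarrow> isl x \<Longrightarrow> projl x \<in> A"
  by (cases x) auto

lemma projr_Plus: "x \<in> A <+> B \<Longrightarrow> \<not> isl x \<Longrightarrow> projr x \<in> B"
  by (cases x) auto

lemma sublist_filter: "sublist xs ys \<Longrightarrow> sublist (filter P xs) (filter P ys)"
proof -
  assume "sublist xs ys"
  then obtain ps ss where "ys = ps @ xs @ ss" by (auto simp: sublist_def)
  hence "filter P ys = filter P ps @ filter P xs @ filter P ss" by simp
  thus ?thesis by (metis sublist_appendI)
qed

lemma projl_map_Inl: "map projl (filter isl (map Inl p)) = p"
  by (induction p) simp_all

lemma projr_map_Inr: "map projr (filter (\<lambda>x. \<not> isl x) (map Inr p)) = p"
  by (induction p) simp_all

theorem lemma5: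
  fixes \<Sigma> :: "'a set" and P :: "'a list set"
    and w\<^sub>o :: "'a list" and c\<^sub>o :: "('a + 'a) list"
  assumes "finite \<Sigma>"
    and "finite P" and "P \<noteq> {}" and "\<forall>p\<in>P. p \<noteq> []" and "P \<subseteq> lists \<Sigma>"
    and "w\<^sub>o \<in> lists \<Sigma>" and "linear_superstring P w\<^sub>o"
    and "\<forall>w\<in>lists \<Sigma>. linear_superstring P w \<longrightarrow> length w\<^sub>o \<le> length w"
    and "c\<^sub>o \<in> lists (\<Sigma> <+> \<Sigma>)"
    and "circular_superstring (plain_str ` P \<union> bar_str ` P) c\<^sub>o"
    and "\<forall>c\<in>lists (\<Sigma> <+> \<Sigma>). circular_superstring (plain_str ` P \<union> bar_str ` P) c
           \<longrightarrow> length c\<^sub>o \<le> length c"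
  shows "2 * length w\<^sub>o = length c\<^sub>o"
proof -
  obtain p0 where p0: "p0 \<in> P" using assms(3) by blast
  have p0ne: "p0 \<noteq> []" using assms(4) p0 by blast
  have "sublist p0 w\<^sub>o" using assms(7) p0 unfolding linear_superstring_def by blast
  hence wne: "w\<^sub>o \<noteq> []" using p0ne by auto
  define c where "c = map Inl w\<^sub>o @ map Inr w\<^sub>o"
  have cne: "c \<noteq> []" using wne c_def by simp
  have "c \<in> lists (\<Sigma> <+> \<Sigma>)" using assms(6) c_def by auto
  moreover have "circular_superstring (plain_str ` P \<union> bar_str ` P) c"
    unfolding circular_superstring_def
  proof (intro conjI cne ballI)
    fix q assume "q \<in> plain_str ` P \<union> bar_str ` P"
    then obtain p where p: "p \<in> P" and q: "q = map Inl p \<or> q = map Inr p"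
      unfolding plain_str_def bar_str_def by blast
    have sp: "sublist p w\<^sub>o" using assms(7) p unfolding linear_superstring_def by blast
    have "sublist q c" using q
    proof
      assume "q = map Inl p"
      thus ?thesis using sp c_def by (metis sublist_append_rightI sublist_map sublist_order.dual_order.trans)
    next
      assume "q = map Inr p"
      thus ?thesis using sp c_def by (metis sublist_append_leftI sublist_map sublist_order.dual_order.trans)
    qed
    thus "circ_substring q c" using sublist_circ cne by blast
  qed
  ultimately have up: "length c\<^sub>o \<le> 2 * length w\<^sub>o" using assms(11) c_def by fastforce
  have circ: "\<forall>q\<in>plain_str ` P \<union> bar_str ` P. circ_substring q c\<^sub>o"
    using assms(10) unfolding circular_superstring_def by blast
  have cl: "circ_substring (map Inl p0) c\<^sub>o" and cr: "circ_substring (map Inr p0) c\<^sub>o"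
    using circ p0 unfolding plain_str_def bar_str_def by auto
  have n0: "c\<^sub>o \<noteq> []" using cl circ_substring_def by blast
  obtain i1 where i1: "map Inl p0 ! 0 = c\<^sub>o ! ((i1 + 0) mod length c\<^sub>o)"
    using cl p0ne unfolding circ_substring_def by auto
  obtain i2 where i2: "map Inr p0 ! 0 = c\<^sub>o ! ((i2 + 0) mod length c\<^sub>o)"
    using cr p0ne unfolding circ_substring_def by auto
  define r1 where "r1 = i1 mod length c\<^sub>o"
  define r2 where "r2 = i2 mod length c\<^sub>o"
  have "c\<^sub>o ! r1 = Inl (p0 ! 0)" using i1 p0ne r1_def by simp
  have "c\<^sub>o ! r2 = Inr (p0 ! 0)" using i2 p0ne r2_def by simp
  have r1: "r1 < length c\<^sub>o" "isl (c\<^sub>o ! r1)" using \<open>c\<^sub>o ! r1 = Inl (p0 ! 0)\<close> n0 unfolding r1_def by simp_all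
  have r2: "r2 < length c\<^sub>o" "\<not> isl (c\<^sub>o ! r2)" using \<open>c\<^sub>o ! r2 = Inr (p0 ! 0)\<close> n0 unfolding r2_def by simp_all
  define WL where "WL = map projl (filter isl (rotate r2 c\<^sub>o))"
  define WR where "WR = map projr (filter (\<lambda>x. \<not> isl x) (rotate r1 c\<^sub>o))"
  have setc: "set (rotate r c\<^sub>o) \<subseteq> \<Sigma> <+> \<Sigma>" for r using assms(9) by auto
  have "WL \<in> lists \<Sigma>" using setc[of r2] unfolding WL_def using projl_Plus by fastforce
  moreover have "linear_superstring P WL" unfolding linear_superstring_def
  proof
    fix p assume p: "p \<in> P"
    have "circ_substring (map Inl p) c\<^sub>o" using circ p unfolding plain_str_def by auto
    moreover have "\<forall>x\<in>set (map Inl p). isl x" by simp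
    ultimately have "sublist (map Inl p) (rotate r2 c\<^sub>o)" using r2 circ_rotate[of "map Inl p" c\<^sub>o r2 isl] by blast
    hence "sublist (filter isl (map Inl p)) (filter isl (rotate r2 c\<^sub>o))"
      by (rule sublist_filter)
    hence "sublist (map projl (filter isl (map Inl p :: ('a + 'a) list))) WL" unfolding WL_def by (rule sublist_map)
    moreover have "map projl (filter isl (map Inl p :: ('a + 'a) list)) = p" by (rule projl_map_Inl)
    ultimately show "sublist p WL" by simp
  qed
  ultimately have l1: "length w\<^sub>o \<le> length (filter isl c\<^sub>o)"
    using assms(8) length_filter_rotate[of isl r2 c\<^sub>o] unfolding WL_def by fastforce
  have "WR \<in> lists \<Sigma>" using setc[of r1] unfolding WR_def using projr_Plus by fastforce
  moreover have "linear_superstring P WR" unfolding linear_superstring_def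
  proof
    fix p assume p: "p \<in> P"
    have "circ_substring (map Inr p) c\<^sub>o" using circ p unfolding bar_str_def by auto
    moreover have "\<forall>x\<in>set (map Inr p). \<not> isl x" by simp
    ultimately have "sublist (map Inr p) (rotate r1 c\<^sub>o)" using r1 circ_rotate[of "map Inr p" c\<^sub>o r1 "\<lambda>x. \<not> isl x"] by blast
    hence "sublist (filter (\<lambda>x. \<not> isl x) (map Inr p)) (filter (\<lambda>x. \<not> isl x) (rotate r1 c\<^sub>o))"
      by (rule sublist_filter)
    hence "sublist (map projr (filter (\<lambda>x. \<not> isl x) (map Inr p :: ('a + 'a) list))) WR" unfolding WR_def by (rule sublist_map)
    moreover have "map projr (filter (\<lambda>x. \<not> isl x) (map Inr p :: ('a + 'a) list)) = p" by (rule projr_map_Inr)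
    ultimately show "sublist p WR" by simp
  qed
  ultimately have l2: "length w\<^sub>o \<le> length (filter (\<lambda>x. \<not> isl x) c\<^sub>o)"
    using assms(8) length_filter_rotate[of "\<lambda>x. \<not> isl x" r1 c\<^sub>o] unfolding WR_def by fastforce
  have "length (filter isl c\<^sub>o) + length (filter (\<lambda>x. \<not> isl x) c\<^sub>o) = length c\<^sub>o"
    by (rule sum_length_filter_compl)
  thus ?thesis using l1 l2 up by linarith
qed

end
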